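(* Let $H$ be a separable real Hilbert space with complete orthonormal system $(e_k)_{k\ge1}$, $F\subset H$ compact, and $\mu$ a probability measure on $F$. Then for every $h\in F$, \[\lim_{\min(d,n)\to\infty}\Lambda^\mu_{d,n}(h)=\mu(\{h\}).\]
   Context: $c_0(\mathbb{N})$ is the set of sequences of nonnegative integers with finitely many nonzero entries; for $a\in c_0(\mathbb{N})$, $f^a:=\prod_k\langle f,e_k\rangle^{a_k}$. A polynomial on $H$ is a finite linear combination $p(f)=\sum_a p_a f^a$; its algebraic degree is $\max\{\sum_k a_k: p_a\neq0\}$ and its harmonic degree is $\max\{k: a_k\neq0\text{ for some } a\text{ with } p_a\neq0\}$. $P_{d,n}$ is the space of polynomials of algebraic degree at most $d$ and harmonic degree at most $n$. The Christoffel function is $\Lambda^\mu_{d,n}(h)=\min\{\int_F p(f)^2\,d\mu(f): p\in P_{d,n},\ p(h)=1\}$ for $h\in H$. *)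

theory Defs
  imports "HOL-Probability.Probability"
begin

definition multi_indices :: "nat \<Rightarrow> nat \<Rightarrow> (nat \<Rightarrow> nat) set" where
  "multi_indices d n = {a. (\<forall>k. a k \<noteq> 0 \<longrightarrow> k \<in> {1..n}) \<and> sum a {1..n} \<le> d}"

definition monomial :: "(nat \<Rightarrow> 'a::real_inner) \<Rightarrow> nat \<Rightarrow> (nat \<Rightarrow> nat) \<Rightarrow> 'a \<Rightarrow> real" where
  "monomial e n a f = (\<Prod>k\<in>{1..n}. (inner f (e k)) ^ (a k))"

definition poly_space :: "(nat \<Rightarrow> 'a::real_inner) \<Rightarrow> nat \<Rightarrow> nat \<Rightarrow> ('a \<Rightarrow> real) set" where
  "poly_space e d n =
     {p. \<exists>c :: (nat \<Rightarrow> nat) \<Rightarrow> real.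
           p = (\<lambda>f. \<Sum>a\<in>multi_indices d n. c a * monomial e n a f)}"

text \<open>Christoffel function (the minimum, written as an infimum).\<close>
definition christoffel :: "'a::real_inner measure \<Rightarrow> (nat \<Rightarrow> 'a) \<Rightarrow> nat \<Rightarrow> nat \<Rightarrow> 'a \<Rightarrow> real" where
  "christoffel M e d n h =
     Inf {integral\<^sup>L M (\<lambda>f. (p f)\<^sup>2) | p. p \<in> poly_space e d n \<and> p h = 1}"

end

theory Submission imports Defs begin

lemma finite_multi_indices: "finite (multi_indices d n)"
proof -
  have "multi_indices d n \<subseteq> {a. \<forall>x. (x \<in> {1..n} \<longrightarrow> a x \<in> {0..d}) \<and> (x \<notin> {1..n} \<longrightarrow> a x = 0)}"
  proof
    fix a assume a: "a \<in> multi_indices d n"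
    have "a x \<le> d" if "x \<in> {1..n}" for x
    proof -
      have "a x \<le> sum a {1..n}" using that by (intro member_le_sum) auto
      then show ?thesis using a by (auto simp: multi_indices_def)
    qed
    then show "a \<in> {a. \<forall>x. (x \<in> {1..n} \<longrightarrow> a x \<in> {0..d}) \<and> (x \<notin> {1..n} \<longrightarrow> a x = 0)}"
      using a by (auto simp: multi_indices_def)
  qed
  moreover have "finite {a. \<forall>x. (x \<in> {1..n} \<longrightarrow> a x \<in> {0..d}) \<and> (x \<notin> {1..n} \<longrightarrow> a x = (0::nat))}"
    by (rule finite_set_of_finite_funs) auto
  ultimately show ?thesis by (rule finite_subset)
qed

lemma poly_spaceI:
  "p = (\<lambda>f. \<Sum>a\<in>multi_indices d n. c a * monomial e n a f) \<Longrightarrow> p \<in> poly_space e d n"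
  unfolding poly_space_def by blast

lemma zero_in_multi_indices: "(\<lambda>_. 0) \<in> multi_indices d n"
  by (simp add: multi_indices_def)

lemma monomial_zero: "monomial e n (\<lambda>_. 0) f = 1"
  by (simp add: monomial_def)

lemma poly_space_const: "(\<lambda>f. c) \<in> poly_space e d n"
proof -
  have "(\<lambda>f. c) = (\<lambda>f. \<Sum>a\<in>multi_indices d n. (if a = (\<lambda>_. 0) then c else 0) * monomial e n a f)"
  proof
    fix f
    have "(\<Sum>a\<in>multi_indices d n. (if a = (\<lambda>_. 0) then c else 0) * monomial e n a f)
       = (\<Sum>a\<in>multi_indices d n. if a = (\<lambda>_. 0) then c * monomial e n a f else 0)"
      by (rule sum.cong) auto
    also have "\<dots> = c"
      using finite_multi_indices zero_in_multi_indices by (simp add: monomial_zero)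
    finally show "c = (\<Sum>a\<in>multi_indices d n. (if a = (\<lambda>_. 0) then c else 0) * monomial e n a f)" by simp
  qed
  then show ?thesis by (rule poly_spaceI)
qed

lemma poly_space_add:
  assumes "p \<in> poly_space e d n" "q \<in> poly_space e d n"
  shows "(\<lambda>f. p f + q f) \<in> poly_space e d n"
proof -
  obtain c1 where c1: "p = (\<lambda>f. \<Sum>a\<in>multi_indices d n. c1 a * monomial e n a f)"
    using assms(1) unfolding poly_space_def by blast
  obtain c2 where c2: "q = (\<lambda>f. \<Sum>a\<in>multi_indices d n. c2 a * monomial e n a f)"
    using assms(2) unfolding poly_space_def by blast
  have "(\<lambda>f. p f + q f) = (\<lambda>f. \<Sum>a\<in>multi_indices d n. (c1 a + c2 a) * monomial e n a f)"
    by (simp add: c1 c2 sum.distrib distrib_right)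
  then show ?thesis by (rule poly_spaceI)
qed

lemma poly_space_scale:
  assumes "p \<in> poly_space e d n"
  shows "(\<lambda>f. r * p f) \<in> poly_space e d n"
proof -
  obtain c1 where c1: "p = (\<lambda>f. \<Sum>a\<in>multi_indices d n. c1 a * monomial e n a f)"
    using assms(1) unfolding poly_space_def by blast
  have "(\<lambda>f. r * p f) = (\<lambda>f. \<Sum>a\<in>multi_indices d n. (r * c1 a) * monomial e n a f)"
    by (simp add: c1 sum_distrib_left mult.assoc)
  then show ?thesis by (rule poly_spaceI)
qed

lemma poly_space_sum:
  assumes "finite I" "\<And>i. i \<in> I \<Longrightarrow> P i \<in> poly_space e d n"
  shows "(\<lambda>f. \<Sum>i\<in>I. P i f) \<in> poly_space e d n"
  using assms
proof (induction I rule: finite_induct)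
  case empty
  then show ?case using poly_space_const[of 0] by simp
next
  case (insert x F)
  then show ?case using poly_space_add[of "P x" e d n "\<lambda>f. \<Sum>i\<in>F. P i f"] by simp
qed

lemma poly_space_mono_d:
  assumes "p \<in> poly_space e d n" "d \<le> d'"
  shows "p \<in> poly_space e d' n"
proof -
  obtain c1 where c1: "p = (\<lambda>f. \<Sum>a\<in>multi_indices d n. c1 a * monomial e n a f)"
    using assms(1) unfolding poly_space_def by blast
  have sub: "multi_indices d n \<subseteq> multi_indices d' n"
    using assms(2) by (auto simp: multi_indices_def)
  have "p = (\<lambda>f. \<Sum>a\<in>multi_indices d' n. (if a \<in> multi_indices d n then c1 a else 0) * monomial e n a f)"
  proof
    fix f
    have "(\<Sum>a\<in>multi_indices d' n. (if a \<in> multi_indices d n then c1 a else 0) * monomial e n a f)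
        = (\<Sum>a\<in>multi_indices d n. (if a \<in> multi_indices d n then c1 a else 0) * monomial e n a f)"
      by (rule sum.mono_neutral_right[OF finite_multi_indices sub]) auto
    then show "p f = (\<Sum>a\<in>multi_indices d' n. (if a \<in> multi_indices d n then c1 a else 0) * monomial e n a f)"
      by (simp add: c1)
  qed
  then show ?thesis by (rule poly_spaceI)
qed

lemma poly_space_mono_n:
  assumes "p \<in> poly_space e d n" "n \<le> n'"
  shows "p \<in> poly_space e d n'"
proof -
  obtain c1 where c1: "p = (\<lambda>f. \<Sum>a\<in>multi_indices d n. c1 a * monomial e n a f)"
    using assms(1) unfolding poly_space_def by blast
  have sumeq: "sum a {1..n'} = sum a {1..n}" if "a \<in> multi_indices d n" for a
    by (rule sum.mono_neutral_right) (use that assms(2) in \<open>auto simp: multi_indices_def\<close>)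
  have sub: "multi_indices d n \<subseteq> multi_indices d n'"
  proof
    fix a assume a: "a \<in> multi_indices d n"
    then show "a \<in> multi_indices d n'"
      using a assms(2) sumeq[OF a] unfolding multi_indices_def mem_Collect_eq atLeastAtMost_iff
      by (metis order_trans)
  qed
  have moneq: "monomial e n' a f = monomial e n a f" if "a \<in> multi_indices d n" for a f
  proof -
    have z: "a i = 0" if "i \<notin> {1..n}" for i
      using that \<open>a \<in> multi_indices d n\<close> by (auto simp: multi_indices_def)
    show ?thesis unfolding monomial_def
      by (rule prod.mono_neutral_right) (use assms(2) z in auto)
  qed
  have "p = (\<lambda>f. \<Sum>a\<in>multi_indices d n'. (if a \<in> multi_indices d n then c1 a else 0) * monomial e n' a f)"
  proof
    fix f
    have "(\<Sum>a\<in>multi_indices d n'. (if a \<in> multi_indices d n then c1 a else 0) * monomial e n' a f)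
        = (\<Sum>a\<in>multi_indices d n. (if a \<in> multi_indices d n then c1 a else 0) * monomial e n' a f)"
      by (rule sum.mono_neutral_right[OF finite_multi_indices sub]) auto
    also have "\<dots> = (\<Sum>a\<in>multi_indices d n. c1 a * monomial e n a f)"
      by (rule sum.cong) (auto simp: moneq)
    finally show "p f = (\<Sum>a\<in>multi_indices d n'. (if a \<in> multi_indices d n then c1 a else 0) * monomial e n' a f)"
      by (simp add: c1)
  qed
  then show ?thesis by (rule poly_spaceI)
qed

lemma poly_space_coord:
  assumes "p \<in> poly_space e d n" "k \<in> {1..n}"
  shows "(\<lambda>f. inner f (e k) * p f) \<in> poly_space e (Suc d) n"
proof -
  obtain c1 where c1: "p = (\<lambda>f. \<Sum>a\<in>multi_indices d n. c1 a * monomial e n a f)"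
    using assms(1) unfolding poly_space_def by blast
  define s where "s = (\<lambda>a::nat\<Rightarrow>nat. a(k := Suc (a k)))"
  have inj: "inj_on s (multi_indices d n)"
  proof (rule inj_onI)
    fix a b assume "s a = s b"
    then have "(s a)(k := a k) = (s b)(k := b k)"
      by (metis (no_types, lifting) Suc_inject fun_upd_same s_def)
    then show "a = b" by (simp add: s_def)
  qed
  have sumS: "sum (s a) {1..n} = Suc (sum a {1..n})" for a
  proof -
    have "sum (s a) {1..n} = s a k + sum (s a) ({1..n} - {k})"
      using assms(2) by (simp add: sum.remove)
    also have "sum (s a) ({1..n} - {k}) = sum a ({1..n} - {k})"
      by (rule sum.cong) (auto simp: s_def)
    also have "s a k + sum a ({1..n} - {k}) = Suc (a k + sum a ({1..n} - {k}))"
      by (simp add: s_def)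
    also have "a k + sum a ({1..n} - {k}) = sum a {1..n}"
      using assms(2) by (simp add: sum.remove)
    finally show ?thesis .
  qed
  have img: "s ` multi_indices d n \<subseteq> multi_indices (Suc d) n"
  proof
    fix b assume "b \<in> s ` multi_indices d n"
    then obtain a where a: "a \<in> multi_indices d n" and b: "b = s a" by blast
    have "sum b {1..n} \<le> Suc d" using a unfolding b sumS by (simp add: multi_indices_def)
    moreover have "\<forall>j. b j \<noteq> 0 \<longrightarrow> j \<in> {1..n}"
      using a assms(2) unfolding b s_def multi_indices_def by auto
    ultimately show "b \<in> multi_indices (Suc d) n" by (simp add: multi_indices_def)
  qed
  have monS: "monomial e n (s a) f = inner f (e k) * monomial e n a f" for a f
  proof -
    have "monomial e n (s a) f = inner f (e k) ^ s a k * (\<Prod>j\<in>{1..n} - {k}. inner f (e j) ^ s a j)"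
      unfolding monomial_def using assms(2) by (simp add: prod.remove)
    also have "(\<Prod>j\<in>{1..n} - {k}. inner f (e j) ^ s a j) = (\<Prod>j\<in>{1..n} - {k}. inner f (e j) ^ a j)"
      by (rule prod.cong) (auto simp: s_def)
    also have "inner f (e k) ^ s a k = inner f (e k) * inner f (e k) ^ a k"
      by (simp add: s_def)
    also have "inner f (e k) * inner f (e k) ^ a k * (\<Prod>j\<in>{1..n} - {k}. inner f (e j) ^ a j)
       = inner f (e k) * monomial e n a f"
      unfolding monomial_def using assms(2) by (simp add: prod.remove mult.assoc)
    finally show ?thesis .
  qed
  define c2 where "c2 = (\<lambda>b. if b \<in> s ` multi_indices d n then c1 (the_inv_into (multi_indices d n) s b) else 0)"
  have "(\<lambda>f. inner f (e k) * p f) = (\<lambda>f. \<Sum>b\<in>multi_indices (Suc d) n. c2 b * monomial e n b f)"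
  proof
    fix f
    have "(\<Sum>b\<in>multi_indices (Suc d) n. c2 b * monomial e n b f)
        = (\<Sum>b\<in>s ` multi_indices d n. c2 b * monomial e n b f)"
      by (rule sum.mono_neutral_right[OF finite_multi_indices img]) (auto simp: c2_def)
    also have "\<dots> = (\<Sum>a\<in>multi_indices d n. c2 (s a) * monomial e n (s a) f)"
      by (simp add: sum.reindex[OF inj])
    also have "\<dots> = (\<Sum>a\<in>multi_indices d n. inner f (e k) * (c1 a * monomial e n a f))"
      by (rule sum.cong) (auto simp: c2_def monS the_inv_into_f_f[OF inj])
    finally show "inner f (e k) * p f = (\<Sum>b\<in>multi_indices (Suc d) n. c2 b * monomial e n b f)"
      by (simp add: c1 sum_distrib_left)
  qed
  then show ?thesis by (rule poly_spaceI)
qed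


lemma poly_space_gmul:
  fixes h :: "'a::real_inner"
  assumes "r \<in> poly_space e d n"
  shows "(\<lambda>f. (1 - (\<Sum>k\<in>{1..n}. (inner f (e k) - inner h (e k))\<^sup>2) / C) * r f)
           \<in> poly_space e (Suc (Suc d)) n"
proof -
  have r2: "r \<in> poly_space e (Suc (Suc d)) n" using assms by (rule poly_space_mono_d) simp
  have T2: "(\<lambda>f. inner f (e k) * r f) \<in> poly_space e (Suc (Suc d)) n" if "k \<in> {1..n}" for k
    using poly_space_coord[OF assms that] by (rule poly_space_mono_d) simp
  have T1: "(\<lambda>f. inner f (e k) * (inner f (e k) * r f)) \<in> poly_space e (Suc (Suc d)) n" if "k \<in> {1..n}" for k
    using poly_space_coord[OF poly_space_coord[OF assms that] that] .
  have mem: "(\<lambda>f. r f + (\<Sum>k\<in>{1..n}. (-1/C) * (inner f (e k) * (inner f (e k) * r f))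
        + ((2 * inner h (e k) / C) * (inner f (e k) * r f) + (- (inner h (e k))\<^sup>2 / C) * r f)))
        \<in> poly_space e (Suc (Suc d)) n"
    by (intro poly_space_add poly_space_sum poly_space_scale T1 T2 r2) auto
  have eq: "(1 - (\<Sum>k\<in>{1..n}. (inner f (e k) - inner h (e k))\<^sup>2) / C) * r f
      = r f + (\<Sum>k\<in>{1..n}. (-1/C) * (inner f (e k) * (inner f (e k) * r f))
        + ((2 * inner h (e k) / C) * (inner f (e k) * r f) + (- (inner h (e k))\<^sup>2 / C) * r f))" for f
  proof -
    have "(\<Sum>k\<in>{1..n}. (-1/C) * (inner f (e k) * (inner f (e k) * r f))
        + ((2 * inner h (e k) / C) * (inner f (e k) * r f) + (- (inner h (e k))\<^sup>2 / C) * r f))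
       = (\<Sum>k\<in>{1..n}. - ((inner f (e k) - inner h (e k))\<^sup>2 / C * r f))"
      by (rule sum.cong) (auto simp: power2_eq_square field_simps diff_divide_distrib add_divide_distrib)
    also have "\<dots> = - ((\<Sum>k\<in>{1..n}. (inner f (e k) - inner h (e k))\<^sup>2) / C * r f)"
      by (simp add: sum_negf sum_distrib_right sum_divide_distrib)
    finally show ?thesis by (simp add: algebra_simps)
  qed
  show ?thesis using mem by (simp only: eq)
qed

lemma poly_space_gpow:
  fixes h :: "'a::real_inner"
  shows "(\<lambda>f. (1 - (\<Sum>k\<in>{1..n}. (inner f (e k) - inner h (e k))\<^sup>2) / C) ^ m)
           \<in> poly_space e (2 * m) n"
proof (induction m)
  case 0
  then show ?case using poly_space_const[of 1] by simp
next
  case (Suc m)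
  from poly_space_gmul[OF Suc, of h C] show ?case by simp
qed

lemma poly_space_continuous:
  assumes "p \<in> poly_space e d n"
  shows "continuous_on UNIV p"
proof -
  obtain c1 where c1: "p = (\<lambda>f. \<Sum>a\<in>multi_indices d n. c1 a * monomial e n a f)"
    using assms(1) unfolding poly_space_def by blast
  show ?thesis unfolding c1 monomial_def by (intro continuous_intros)
qed

lemma bessel:
  fixes e :: "nat \<Rightarrow> 'a::real_inner"
  assumes orth: "\<forall>j\<ge>1. \<forall>k\<ge>1. inner (e j) (e k) = (if j = k then 1 else 0)"
  shows "(\<Sum>k\<in>{1..n}. (inner x (e k))\<^sup>2) \<le> inner x x"
proof -
  define y where "y = (\<Sum>k\<in>{1..n}. inner x (e k) *\<^sub>R e k)"
  have xy: "inner x y = (\<Sum>k\<in>{1..n}. (inner x (e k))\<^sup>2)"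
    by (simp add: y_def inner_sum_right power2_eq_square)
  have yy: "inner y y = (\<Sum>k\<in>{1..n}. (inner x (e k))\<^sup>2)"
  proof -
    have "inner y y = (\<Sum>j\<in>{1..n}. \<Sum>k\<in>{1..n}. inner x (e j) * (inner x (e k) * inner (e k) (e j)))"
      by (simp add: y_def inner_sum_left inner_sum_right sum_distrib_left mult.assoc mult.left_commute)
    also have "\<dots> = (\<Sum>j\<in>{1..n}. \<Sum>k\<in>{1..n}. if k = j then inner x (e j) * inner x (e k) else 0)"
      by (intro sum.cong refl) (use orth in auto)
    also have "\<dots> = (\<Sum>k\<in>{1..n}. (inner x (e k))\<^sup>2)"
      by (simp add: power2_eq_square)
    finally show ?thesis .
  qed
  have "0 \<le> inner (x - y) (x - y)" by simp
  also have "inner (x - y) (x - y) = inner x x - 2 * inner x y + inner y y"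
    by (simp add: inner_diff_left inner_diff_right inner_commute)
  finally show ?thesis using xy yy by simp
qed

lemma complete_zero:
  fixes e :: "nat \<Rightarrow> 'a::real_inner"
  assumes cs: "closure (span (e ` {1..})) = UNIV"
    and z: "\<forall>k\<ge>1. inner x (e k) = 0"
  shows "x = 0"
proof -
  have "span (e ` {1..}) \<subseteq> {y. inner x y = 0}"
    by (rule span_minimal) (use z in \<open>auto intro: subspace_hyperplane\<close>)
  then have "closure (span (e ` {1..})) \<subseteq> {y. inner x y = 0}"
    by (rule closure_minimal) (rule closed_hyperplane)
  then have "inner x x = 0" using cs by blast
  then show ?thesis by simp
qed


theorem lemma4:
  fixes e :: "nat \<Rightarrow> 'a::{real_inner, complete_space}"
    and F :: "'a set" and M :: "'a measure" and h :: 'a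
  assumes orthonormal: "\<forall>j\<ge>1. \<forall>k\<ge>1. inner (e j) (e k) = (if j = k then 1 else 0)"
    and complete_system: "closure (span (e ` {1..})) = UNIV"
    and F_compact: "compact F"
    and M_prob: "prob_space M"
    and M_space: "space M = F"
    and M_sets: "sets M = sets (restrict_space borel F)"
    and h_in: "h \<in> F"
  shows "((\<lambda>(d, n). christoffel M e d n h) \<longlongrightarrow> measure M {h})
           (sequentially \<times>\<^sub>F sequentially)"
proof -
  interpret prob_space M by (rule M_prob)
  have meas: "g \<in> borel_measurable M" if "continuous_on UNIV g" for g :: "'a \<Rightarrow> real"
  proof -
    have "g \<in> borel_measurable (restrict_space borel F)"
      by (intro measurable_restrict_space1 borel_measurable_continuous_onI that)
    then show ?thesis using measurable_cong_sets[OF M_sets refl, of borel] by blast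
  qed
  have integ: "integrable M g" if "continuous_on UNIV g" for g :: "'a \<Rightarrow> real"
  proof -
    have "compact (g ` F)"
      by (rule compact_continuous_image[OF continuous_on_subset[OF that] F_compact]) simp
    then obtain B where B: "\<forall>y\<in>g ` F. norm y \<le> B"
      using compact_imp_bounded bounded_iff by metis
    show ?thesis
      by (rule finite_measure.integrable_const_bound[where B=B])
         (use B M_space meas[OF that] in \<open>auto intro!: AE_I2 finite_measure_axioms\<close>)
  qed
  have h_sets: "{h} \<in> sets M"
  proof -
    have "{h} = F \<inter> {h}" using h_in by auto
    moreover have "{h} \<in> sets (borel :: 'a measure)" by simp
    ultimately have "{h} \<in> sets (restrict_space borel F)"
      unfolding sets_restrict_space by blast
    then show ?thesis using M_sets by simp
  qed
  have ind_int: "integral\<^sup>L M (indicator {h} :: 'a \<Rightarrow> real) = measure M {h}"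
    using h_sets M_space h_in by (simp add: integral_indicator)
  have ind_integrable: "integrable M (indicator {h} :: 'a \<Rightarrow> real)"
    using h_sets by (intro integrable_real_indicator) (auto simp: less_top[symmetric])
  define S where "S = (\<lambda>d n. {integral\<^sup>L M (\<lambda>f. (p f)\<^sup>2) | p. p \<in> poly_space e d n \<and> p h = 1})"
  have chr: "christoffel M e d n h = Inf (S d n)" for d n
    by (simp add: christoffel_def S_def)
  have sq_cont: "continuous_on UNIV (\<lambda>f. (p f)\<^sup>2)" if "p \<in> poly_space e d n" for p d n
    using poly_space_continuous[OF that] by (intro continuous_intros)
  have lower: "measure M {h} \<le> integral\<^sup>L M (\<lambda>f. (p f)\<^sup>2)"
    if "p \<in> poly_space e d n" "p h = 1" for p d n
  proof -
    have "integral\<^sup>L M (indicator {h} :: 'a \<Rightarrow> real) \<le> integral\<^sup>L M (\<lambda>f. (p f)\<^sup>2)"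
      by (rule integral_mono[OF ind_integrable integ[OF sq_cont[OF that(1)]]])
         (use that(2) in \<open>auto simp: indicator_def\<close>)
    then show ?thesis using ind_int by simp
  qed
  have S_ne: "S d n \<noteq> {}" for d n
    using poly_space_const[of 1 e d n] unfolding S_def by blast
  have S_bdd: "bdd_below (S d n)" for d n
    unfolding S_def by (rule bdd_belowI[where m=0]) auto
  have Lge: "measure M {h} \<le> christoffel M e d n h" for d n
    unfolding chr by (rule cInf_greatest[OF S_ne]) (auto simp: S_def intro: lower)
  have Lle: "christoffel M e d n h \<le> integral\<^sup>L M (\<lambda>f. (p f)\<^sup>2)"
    if "p \<in> poly_space e d n" "p h = 1" for p d n
    unfolding chr by (rule cInf_lower[OF _ S_bdd]) (use that in \<open>auto simp: S_def\<close>)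
  obtain B where B: "\<forall>x\<in>F. norm x \<le> B"
    using compact_imp_bounded[OF F_compact] bounded_iff by metis
  define C where "C = 4 * B\<^sup>2 + 1"
  have Cpos: "C > 0" unfolding C_def by (simp add: add_nonneg_pos)
  define q where "q = (\<lambda>n f. \<Sum>k\<in>{1..n}. (inner f (e k) - inner h (e k))\<^sup>2)"
  define P where "P = (\<lambda>n f. (1 - q n f / C) ^ n)"
  have P_poly: "P n \<in> poly_space e (2 * n) n" for n
    unfolding P_def q_def by (rule poly_space_gpow)
  have P_h: "P n h = 1" for n
    by (simp add: P_def q_def)
  have q_nonneg: "0 \<le> q n f" for n f unfolding q_def by (intro sum_nonneg) auto
  have q_le: "q n f < C" if "f \<in> F" for n f
  proof -
    have "q n f = (\<Sum>k\<in>{1..n}. (inner (f - h) (e k))\<^sup>2)"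
      unfolding q_def by (simp add: inner_diff_left)
    also have "\<dots> \<le> inner (f - h) (f - h)" by (rule bessel[OF orthonormal])
    also have "\<dots> = (norm (f - h))\<^sup>2" by (simp add: power2_norm_eq_inner)
    also have "\<dots> \<le> (2 * B)\<^sup>2"
    proof (rule power_mono)
      show "norm (f - h) \<le> 2 * B"
      proof -
        have "norm f \<le> B" "norm h \<le> B" using B that h_in by auto
        then show ?thesis using norm_triangle_ineq4[of f h] by linarith
      qed
    qed simp
    also have "\<dots> < C" by (simp add: C_def power2_eq_square)
    finally show ?thesis .
  qed
  have g_bounds: "0 \<le> 1 - q n f / C" "1 - q n f / C \<le> 1" if "f \<in> F" for n f
    using q_le[OF that, of n] q_nonneg[of n f] Cpos by (auto simp: field_simps)
  have P_bounds: "0 \<le> P n f" "P n f \<le> 1" if "f \<in> F" for n f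
    unfolding P_def using g_bounds[OF that, of n] by (auto intro: power_le_one)
  have conv: "(\<lambda>n. (P n f)\<^sup>2) \<longlonglongrightarrow> indicator {h} f" if "f \<in> F" for f
  proof (cases "f = h")
    case True
    then show ?thesis by (simp add: P_h)
  next
    case False
    have "\<not> (\<forall>k\<ge>1. inner (f - h) (e k) = 0)"
      using complete_zero[OF complete_system, of "f - h"] False by auto
    then obtain K where K: "K \<ge> 1" "inner (f - h) (e K) \<noteq> 0" by auto
    define c where "c = (inner f (e K) - inner h (e K))\<^sup>2"
    have cpos: "c > 0" using K(2) by (simp add: c_def inner_diff_left)
    define r where "r = 1 - c / C"
    have qge: "c \<le> q n f" if "n \<ge> K" for n
      unfolding q_def c_def by (rule member_le_sum) (use K(1) that in auto)
    have r_lt: "norm r < 1" 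
    proof -
      have "c \<le> q K f" by (rule qge) simp
      then have "c < C" using q_le[OF \<open>f \<in> F\<close>] by (meson le_less_trans)
      then show ?thesis using cpos Cpos by (simp add: r_def field_simps)
    qed
    have "(\<lambda>n. P n f) \<longlonglongrightarrow> 0"
    proof (rule tendsto_sandwich[where f="\<lambda>_. 0" and h="\<lambda>n. r ^ n"])
      show "\<forall>\<^sub>F n in sequentially. 0 \<le> P n f" using P_bounds[OF that] by simp
      show "\<forall>\<^sub>F n in sequentially. P n f \<le> r ^ n"
        unfolding eventually_sequentially
      proof (intro exI allI impI)
        fix n assume "K \<le> n"
        have "1 - q n f / C \<le> r"
          using qge[OF \<open>K \<le> n\<close>] Cpos by (simp add: r_def divide_right_mono)
        then show "P n f \<le> r ^ n"
          unfolding P_def by (intro power_mono) (use g_bounds[OF that] in auto)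
      qed
    qed (auto intro: LIMSEQ_power_zero r_lt)
    then have "(\<lambda>n. (P n f)\<^sup>2) \<longlonglongrightarrow> 0\<^sup>2" by (intro tendsto_intros)
    then show ?thesis using False by simp
  qed
  have lim: "(\<lambda>n. integral\<^sup>L M (\<lambda>f. (P n f)\<^sup>2)) \<longlonglongrightarrow> integral\<^sup>L M (indicator {h} :: 'a \<Rightarrow> real)"
  proof (rule integral_dominated_convergence[where w="\<lambda>_. 1"])
    show "indicator {h} \<in> borel_measurable M" using h_sets by simp
    show "(\<lambda>f. (P n f)\<^sup>2) \<in> borel_measurable M" for n by (rule meas[OF sq_cont[OF P_poly]])
    show "integrable M (\<lambda>_. 1::real)" by simp
    show "AE x in M. (\<lambda>n. (P n x)\<^sup>2) \<longlonglongrightarrow> indicator {h} x"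
      by (rule AE_I2) (use conv M_space in auto)
    show "AE x in M. norm ((P n x)\<^sup>2) \<le> 1" for n
      by (rule AE_I2) (use P_bounds M_space in \<open>auto intro: power_le_one\<close>)
  qed
  show ?thesis
    unfolding tendsto_iff
  proof (intro allI impI)
    fix \<epsilon> :: real assume "\<epsilon> > 0"
    from lim[unfolded ind_int] \<open>\<epsilon> > 0\<close> obtain N0 where
      N0: "\<forall>n\<ge>N0. dist (integral\<^sup>L M (\<lambda>f. (P n f)\<^sup>2)) (measure M {h}) < \<epsilon>"
      unfolding lim_sequentially by blast
    show "\<forall>\<^sub>F x in sequentially \<times>\<^sub>F sequentially.
            dist ((\<lambda>(d, n). christoffel M e d n h) x) (measure M {h}) < \<epsilon>"
      unfolding eventually_prod_sequentially
    proof (intro exI allI impI)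
      fix m n assume mn: "2 * N0 \<le> m" "2 * N0 \<le> n"
      have Pin: "P N0 \<in> poly_space e n m"
        by (rule poly_space_mono_n[OF poly_space_mono_d[OF P_poly]]) (use mn in auto)
      have "christoffel M e n m h \<le> integral\<^sup>L M (\<lambda>f. (P N0 f)\<^sup>2)"
        by (rule Lle[OF Pin P_h])
      moreover have "integral\<^sup>L M (\<lambda>f. (P N0 f)\<^sup>2) < measure M {h} + \<epsilon>"
        using N0 by (auto simp: dist_real_def)
      moreover note Lge[of n m]
      ultimately show "dist ((\<lambda>(d, n). christoffel M e d n h) (n, m)) (measure M {h}) < \<epsilon>"
        by (simp add: dist_real_def)
    qed
  qed
qed

end
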